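(* The topological graph $\mathbb G$ is hereditarily unicoherent: for every two closed connected subsets $P,Q\subseteq V(\mathbb G)$, the intersection $P\cap Q$ is connected.
   Context: A graph is a pair $A=(V(A),E(A))$ with $E(A)\subseteq V(A)^2$ reflexive and symmetric; a topological graph additionally has $V$ compact, second countable, zero-dimensional and $E$ closed. Epimorphisms are (continuous) edge-preserving maps surjective on vertices and edges. A vertex set $S$ is disconnected if there are nonempty closed subsets $P,Q$ of $S$ with $P\cup Q=S$ and no edge $\langle a,b\rangle$ with $a\in P$, $b\in Q$; otherwise connected (the empty set counts as connected); components are maximal connected subsets. An epimorphism $f\colon A\to B$ is confluent if for every connected $Q\subseteq V(B)$ each component $C$ of $f^{-1}(Q)$ has $f(C)=Q$. $\mathbb G$ is the projective Fraïssé limit of the class of finite connected graphs with confluent epimorphisms: the unique topological graph such that (1) every finite connected graph is a confluent epimorphic image of $\mathbb G$; (2) for finite connected $A,B$ and confluent epimorphisms $f\colon\mathbb G\to A$, $g\colon B\to A$ there is a confluent epimorphism $h\colon\mathbb G\to B$ with $f=g\circ h$; (3) for each $\varepsilon>0$ some confluent epimorphism from $\mathbb G$ onto a finite connected graph has all point-preimages of diameter $<\varepsilon$. *)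

theory Defs
  imports "HOL-Analysis.Analysis"
begin

definition is_graph :: "'a set \<Rightarrow> ('a \<times> 'a) set \<Rightarrow> bool" where
  "is_graph V E \<longleftrightarrow> E \<subseteq> V \<times> V \<and> (\<forall>x\<in>V. (x, x) \<in> E) \<and> (\<forall>x y. (x, y) \<in> E \<longrightarrow> (y, x) \<in> E)"

text \<open>Finite graphs (vertices taken, without loss of generality, among the naturals,
  with their discrete topology).\<close>
definition finite_graph :: "nat set \<Rightarrow> (nat \<times> nat) set \<Rightarrow> bool" where
  "finite_graph V E \<longleftrightarrow> finite V \<and> is_graph V E"

text \<open>Topological graphs, on a metric space of vertices (compact, second countable,
  zero-dimensional vertex set, closed edge set).\<close>
definition topological_graph :: "'a::metric_space set \<Rightarrow> ('a \<times> 'a) set \<Rightarrow> bool" where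
  "topological_graph V E \<longleftrightarrow> is_graph V E \<and> compact V
     \<and> (\<exists>\<B>. countable \<B> \<and> (\<forall>b\<in>\<B>. openin (top_of_set V) b)
            \<and> (\<forall>U. openin (top_of_set V) U \<longrightarrow> (\<exists>\<C>\<subseteq>\<B>. U = \<Union>\<C>)))
     \<and> (\<forall>U x. openin (top_of_set V) U \<and> x \<in> U \<longrightarrow>
            (\<exists>W. openin (top_of_set V) W \<and> closedin (top_of_set V) W \<and> x \<in> W \<and> W \<subseteq> U))
     \<and> closed E"

definition gconnected :: "('a::topological_space \<times> 'a) set \<Rightarrow> 'a set \<Rightarrow> bool" where
  "gconnected E S \<longleftrightarrow> \<not> (\<exists>P Q. P \<noteq> {} \<and> Q \<noteq> {}
      \<and> closedin (top_of_set S) P \<and> closedin (top_of_set S) Q \<and> P \<union> Q = S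
      \<and> (\<forall>a\<in>P. \<forall>b\<in>Q. (a, b) \<notin> E))"

definition gcomponent :: "('a::topological_space \<times> 'a) set \<Rightarrow> 'a set \<Rightarrow> 'a set \<Rightarrow> bool" where
  "gcomponent E S C \<longleftrightarrow> C \<subseteq> S \<and> gconnected E C
      \<and> (\<forall>D. C \<subseteq> D \<and> D \<subseteq> S \<and> gconnected E D \<longrightarrow> D = C)"

definition epimorphism :: "'a::topological_space set \<Rightarrow> ('a \<times> 'a) set
     \<Rightarrow> 'b::topological_space set \<Rightarrow> ('b \<times> 'b) set \<Rightarrow> ('a \<Rightarrow> 'b) \<Rightarrow> bool" where
  "epimorphism VA EA VB EB f \<longleftrightarrow> continuous_on VA f \<and> f ` VA = VB
      \<and> (\<lambda>(x, y). (f x, f y)) ` EA = EB"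

definition confluent :: "'a::topological_space set \<Rightarrow> ('a \<times> 'a) set
     \<Rightarrow> 'b::topological_space set \<Rightarrow> ('b \<times> 'b) set \<Rightarrow> ('a \<Rightarrow> 'b) \<Rightarrow> bool" where
  "confluent VA EA VB EB f \<longleftrightarrow> epimorphism VA EA VB EB f
      \<and> (\<forall>Q. Q \<subseteq> VB \<and> gconnected EB Q \<longrightarrow>
            (\<forall>C. gcomponent EA (VA \<inter> f -` Q) C \<longrightarrow> f ` C = Q))"

definition fin_conn_graph :: "nat set \<Rightarrow> (nat \<times> nat) set \<Rightarrow> bool" where
  "fin_conn_graph V E \<longleftrightarrow> finite_graph V E \<and> V \<noteq> {} \<and> gconnected E V"

text \<open>The characterizing properties (1)-(3) of the projective Fraisse limit \<G>.\<close>
definition is_proj_fraisse_limit :: "'a::metric_space set \<Rightarrow> ('a \<times> 'a) set \<Rightarrow> bool" where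
  "is_proj_fraisse_limit V E \<longleftrightarrow> topological_graph V E
   \<and> (\<forall>A EA. fin_conn_graph A EA \<longrightarrow> (\<exists>f. confluent V E A EA f))
   \<and> (\<forall>A EA B EB f g. fin_conn_graph A EA \<and> fin_conn_graph B EB
        \<and> confluent V E A EA f \<and> confluent B EB A EA g
        \<longrightarrow> (\<exists>h. confluent V E B EB h \<and> (\<forall>x\<in>V. f x = g (h x))))
   \<and> (\<forall>\<epsilon>>0. \<exists>A EA f. fin_conn_graph A EA \<and> confluent V E A EA f
        \<and> (\<forall>a\<in>A. diameter (V \<inter> f -` {a}) < \<epsilon>))"

end

theory Submission
  imports Defs
begin

lemma sep_cc:
  fixes S T :: "'a::metric_space set"
  assumes "compact S" "closed T" "S \<inter> T = {}"
  shows "\<exists>d>0. \<forall>x\<in>S. \<forall>y\<in>T. d \<le> dist x y"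
proof (cases "S = {} \<or> T = {}")
  case True then show ?thesis by (auto intro: exI[of _ 1])
next
  case False
  have "continuous_on S (\<lambda>x. infdist x T)" by (intro continuous_intros)
  then obtain x0 where x0: "x0 \<in> S" "\<forall>x\<in>S. infdist x0 T \<le> infdist x T"
    using continuous_attains_inf[OF assms(1)] False by blast
  have pos: "infdist x0 T > 0" using infdist_pos_not_in_closed assms False x0 by blast
  show ?thesis
  proof (intro exI[of _ "infdist x0 T"] conjI pos ballI)
    fix x y assume "x \<in> S" "y \<in> T"
    then show "infdist x0 T \<le> dist x y" using x0 infdist_le[of y T x] by force
  qed
qed

lemma lemB:
  fixes X Y :: "'a::metric_space set"
  assumes "compact X" "compact Y" "closed E" "X \<noteq> {}" "Y \<noteq> {}"
    and "\<forall>a\<in>X. \<forall>b\<in>Y. (a, b) \<notin> E"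
  shows "\<exists>\<eta>>0. \<forall>u u'. infdist u X < \<eta> \<longrightarrow> infdist u' Y < \<eta> \<longrightarrow> (u, u') \<notin> E"
proof -
  have "compact (X \<times> Y)" using assms compact_Times by blast
  moreover have "(X \<times> Y) \<inter> E = {}" using assms(6) by auto
  ultimately obtain d where d: "d > 0" "\<forall>z\<in>X \<times> Y. \<forall>e\<in>E. d \<le> dist z e"
    using sep_cc[of "X \<times> Y" E] assms(3) by blast
  show ?thesis
  proof (intro exI[of _ "d/2"] conjI allI impI)
    show "d/2 > 0" using d by simp
    fix u u' assume h1: "infdist u X < d/2" and h2: "infdist u' Y < d/2"
    obtain x where x: "x \<in> X" "dist u x < d/2"
      using h1 assms(4) by (metis infdist_notempty cINF_less_iff bdd_below_image_dist)
    obtain y where y: "y \<in> Y" "dist u' y < d/2"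
      using h2 assms(5) by (metis infdist_notempty cINF_less_iff bdd_below_image_dist)
    have "dist (x, y) (u, u') \<le> dist x u + dist y u'"
      by (simp add: dist_Pair_Pair sqrt_sum_squares_le_sum)
    also have "\<dots> < d" using x y by (simp add: dist_commute)
    finally have "dist (x,y) (u,u') < d" .
    then show "(u, u') \<notin> E" using d x y by force
  qed
qed

lemma lemA:
  fixes P Q X Y :: "'a::metric_space set"
  assumes "compact P" "closed Q" "X \<union> Y = P \<inter> Q" "\<eta> > 0"
  shows "\<exists>\<epsilon>>0. \<forall>p\<in>P. \<forall>q\<in>Q. dist p q < \<epsilon> \<longrightarrow> infdist p X < \<eta> \<or> infdist p Y < \<eta>"
proof -
  let ?P' = "P \<inter> ({p. \<eta> \<le> infdist p X} \<inter> {p. \<eta> \<le> infdist p Y})"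
  have "closed ({p. \<eta> \<le> infdist p X} \<inter> {p. \<eta> \<le> infdist p Y})"
    by (intro closed_Int closed_Collect_le continuous_intros continuous_on_const)
  then have "compact ?P'" using assms(1) by (simp add: compact_Int_closed)
  moreover have "?P' \<inter> Q = {}"
  proof (rule ccontr)
    assume "?P' \<inter> Q \<noteq> {}"
    then obtain p where "p \<in> ?P'" "p \<in> Q" by blast
    then have "p \<in> X \<union> Y" using assms(3) by blast
    then show False using \<open>p \<in> ?P'\<close> assms(4) by auto
  qed
  ultimately obtain d where d: "d > 0" "\<forall>x\<in>?P'. \<forall>y\<in>Q. d \<le> dist x y"
    using sep_cc assms(2) by blast
  show ?thesis
    by (rule exI[of _ d]) (use d in \<open>auto simp: not_le[symmetric]\<close>)
qed

lemma gconnectedD: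
  assumes "gconnected E S" "P \<noteq> {}" "Q \<noteq> {}" "closedin (top_of_set S) P" "closedin (top_of_set S) Q"
    "P \<union> Q = S" "\<forall>a\<in>P. \<forall>b\<in>Q. (a, b) \<notin> E"
  shows False
  using assms unfolding gconnected_def by blast

lemma nat_closedin: "P \<subseteq> S \<Longrightarrow> closedin (top_of_set S) (P::nat set)"
  by (simp add: closed_subset closed_def open_discrete)

lemma const_conn:
  fixes S :: "nat set"
  assumes "gconnected E S" "\<And>a b. a \<in> S \<Longrightarrow> b \<in> S \<Longrightarrow> (a,b) \<in> E \<Longrightarrow> \<phi> a = \<phi> b"
    "a \<in> S" "b \<in> S"
  shows "\<phi> a = \<phi> b"
proof (rule ccontr)
  assume ne: "\<phi> a \<noteq> \<phi> b"
  let ?P = "{s\<in>S. \<phi> s = \<phi> a}" and ?Q = "{s\<in>S. \<phi> s \<noteq> \<phi> a}"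
  have 1: "?P \<noteq> {}" using assms(3) by auto
  have 2: "?Q \<noteq> {}" using assms(4) ne by auto
  have 3: "closedin (top_of_set S) ?P" "closedin (top_of_set S) ?Q" by (rule nat_closedin, blast)+
  have 4: "?P \<union> ?Q = S" by blast
  have 5: "\<forall>x\<in>?P. \<forall>y\<in>?Q. (x, y) \<notin> E"
  proof (intro ballI)
    fix x y assume "x \<in> ?P" "y \<in> ?Q"
    then show "(x, y) \<notin> E" using assms(2)[of x y] by auto
  qed
  show False by (rule gconnectedD[OF assms(1) 1 2 3 4 5])
qed

lemma insert_conn:
  fixes C :: "nat set"
  assumes "gconnected E C" "c \<in> C" "(c,n) \<in> E" "(n,c) \<in> E"
  shows "gconnected E (insert n C)"
proof (cases "n \<in> C")
  case True then show ?thesis using assms by (simp add: insert_absorb)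
next
  case nC: False
  show ?thesis unfolding gconnected_def
  proof
    assume "\<exists>P Q. P \<noteq> {} \<and> Q \<noteq> {} \<and> closedin (top_of_set (insert n C)) P \<and>
      closedin (top_of_set (insert n C)) Q \<and> P \<union> Q = insert n C \<and> (\<forall>a\<in>P. \<forall>b\<in>Q. (a, b) \<notin> E)"
    then obtain P Q where PQ: "P \<noteq> {}" "Q \<noteq> {}" "P \<union> Q = insert n C" "\<forall>a\<in>P. \<forall>b\<in>Q. (a, b) \<notin> E"
      by blast
    have "\<not> (P \<inter> C \<noteq> {} \<and> Q \<inter> C \<noteq> {})"
    proof
      assume h: "P \<inter> C \<noteq> {} \<and> Q \<inter> C \<noteq> {}"
      have 3: "closedin (top_of_set C) (P \<inter> C)" "closedin (top_of_set C) (Q \<inter> C)"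
        by (rule nat_closedin, blast)+
      have 4: "(P \<inter> C) \<union> (Q \<inter> C) = C" using PQ(3) by blast
      have 5: "\<forall>a\<in>P \<inter> C. \<forall>b\<in>Q \<inter> C. (a, b) \<notin> E" using PQ(4) by blast
      show False using gconnectedD[OF assms(1) _ _ 3 4 5] h by blast
    qed
    then have "P \<inter> C = {} \<or> Q \<inter> C = {}" by blast
    then show False
    proof
      assume e: "P \<inter> C = {}"
      have "n \<in> P" using PQ(1,3) e by (metis Int_insert_right_if0 Int_absorb1 inf_sup_absorb insert_is_Un subset_singleton_iff)
      have "c \<in> Q" using PQ(3) e assms(2) by (metis Int_iff UnE empty_iff insertCI)
      then show False using PQ(4) assms(4) \<open>n \<in> P\<close> by blast
    next
      assume e: "Q \<inter> C = {}"
      have "n \<in> Q" using PQ(2,3) e by (metis Int_insert_right_if0 Int_absorb1 inf_sup_absorb insert_is_Un subset_singleton_iff sup_commute)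
      have "c \<in> P" using PQ(3) e assms(2) by (metis Int_iff UnE empty_iff insertCI)
      then show False using PQ(4) assms(3) \<open>n \<in> Q\<close> by blast
    qed
  qed
qed

lemma single_conn:
  assumes "(z,z) \<in> E"
  shows "gconnected E {z::nat}"
  unfolding gconnected_def
proof
  assume "\<exists>P Q. P \<noteq> {} \<and> Q \<noteq> {} \<and> closedin (top_of_set {z}) P \<and>
      closedin (top_of_set {z}) Q \<and> P \<union> Q = {z} \<and> (\<forall>a\<in>P. \<forall>b\<in>Q. (a, b) \<notin> E)"
  then obtain P Q where "P \<noteq> {}" "Q \<noteq> {}" "P \<union> Q = {z}" "\<forall>a\<in>P. \<forall>b\<in>Q. (a, b) \<notin> E"
    by blast
  then have "P \<subseteq> {z}" "Q \<subseteq> {z}" by auto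
  then have "z \<in> P" "z \<in> Q" using \<open>P \<noteq> {}\<close> \<open>Q \<noteq> {}\<close> by auto
  then show False using assms \<open>\<forall>a\<in>P. \<forall>b\<in>Q. (a, b) \<notin> E\<close> by blast
qed

lemma img_conn:
  fixes f :: "'a::topological_space \<Rightarrow> nat"
  assumes "gconnected E P" "P \<subseteq> V" "continuous_on V f" "\<And>u v. (u,v) \<in> E \<Longrightarrow> (f u, f v) \<in> E'"
  shows "gconnected E' (f ` P)"
  unfolding gconnected_def
proof
  assume "\<exists>S1 S2. S1 \<noteq> {} \<and> S2 \<noteq> {} \<and> closedin (top_of_set (f ` P)) S1 \<and>
      closedin (top_of_set (f ` P)) S2 \<and> S1 \<union> S2 = f ` P \<and> (\<forall>a\<in>S1. \<forall>b\<in>S2. (a, b) \<notin> E')"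
  then obtain S1 S2 where S: "S1 \<noteq> {}" "S2 \<noteq> {}" "S1 \<union> S2 = f ` P" "\<forall>a\<in>S1. \<forall>b\<in>S2. (a, b) \<notin> E'"
    by blast
  have cP: "continuous_on P f" using assms(2,3) continuous_on_subset by blast
  have cl: "closed (Z::nat set)" for Z by (simp add: closed_def open_discrete)
  have 1: "P \<inter> f -` Si \<noteq> {}" if a: "Si \<noteq> {}" "Si \<subseteq> f ` P" for Si
  proof -
    obtain s where "s \<in> Si" using a by blast
    then have "s \<in> f ` P" using a by blast
    then obtain p where "p \<in> P" "f p = s" by blast
    then show ?thesis using \<open>s \<in> Si\<close> by blast
  qed
  have 1: "P \<inter> f -` S1 \<noteq> {}" "P \<inter> f -` S2 \<noteq> {}" using 1 S(1,2,3) by auto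
  have 2: "closedin (top_of_set P) (P \<inter> f -` S1)" "closedin (top_of_set P) (P \<inter> f -` S2)"
    using continuous_closedin_preimage[OF cP cl] by blast+
  have 3: "(P \<inter> f -` S1) \<union> (P \<inter> f -` S2) = P" using S(3) by blast
  have 4: "\<forall>a\<in>P \<inter> f -` S1. \<forall>b\<in>P \<inter> f -` S2. (a, b) \<notin> E"
    using S(4) assms(4) by blast
  show False by (rule gconnectedD[OF assms(1) 1 2 3 4])
qed

lemma double_cover:
  fixes A S T W :: "nat set" and EA :: "(nat \<times> nat) set"
  assumes G: "fin_conn_graph A EA" and ST: "S \<subseteq> A" "T \<subseteq> A" "gconnected EA S" "gconnected EA T"
    and cons: "\<And>a b. a \<in> S \<inter> T \<Longrightarrow> b \<in> S \<inter> T \<Longrightarrow> (a,b) \<in> EA \<Longrightarrow> (a\<in>W \<longleftrightarrow> b\<in>W)"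
    and w: "w1 \<in> S \<inter> T" "w1 \<notin> W" "w2 \<in> S \<inter> T" "w2 \<in> W"
  shows "\<exists>B EB g. fin_conn_graph B EB \<and> confluent B EB A EA g
     \<and> (\<forall>m n. (m,n) \<in> EB \<longrightarrow> g m \<in> S \<longrightarrow> g n \<in> S \<longrightarrow> even m = even n)
     \<and> (\<forall>m n. (m,n) \<in> EB \<longrightarrow> g m \<in> T \<longrightarrow> g n \<in> T \<longrightarrow>
           (even m \<noteq> (g m \<in> W)) = (even n \<noteq> (g n \<in> W)))"
proof -
  define tw where "tw a b \<longleftrightarrow> a\<in>T \<and> b\<in>T \<and> \<not>(a\<in>S \<and> b\<in>S) \<and> ((a\<in>W) \<noteq> (b\<in>W))" for a b
  define B where "B = {n::nat. n div 2 \<in> A}"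
  define g where "g = (\<lambda>n::nat. n div 2)"
  define EB where "EB = {(m,n). (m div 2, n div 2) \<in> EA \<and> ((even m = even n) \<longleftrightarrow> \<not> tw (m div 2) (n div 2))}"
  have finA: "finite A" and neA: "A \<noteq> {}" and cA: "gconnected EA A"
    and EAA: "EA \<subseteq> A \<times> A" and reflA: "\<And>x. x \<in> A \<Longrightarrow> (x,x) \<in> EA"
    and symA: "\<And>x y. (x,y) \<in> EA \<Longrightarrow> (y,x) \<in> EA"
    using G unfolding fin_conn_graph_def finite_graph_def is_graph_def by blast+
  have twsym: "tw a b = tw b a" for a b unfolding tw_def by blast
  have twrefl: "\<not> tw a a" for a unfolding tw_def by blast
  have EB_B: "m \<in> B \<and> n \<in> B" if "(m,n) \<in> EB" for m n
    using that EAA unfolding EB_def B_def by auto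
  have EB_EA: "(m div 2, n div 2) \<in> EA" if "(m,n) \<in> EB" for m n
    using that unfolding EB_def by auto
  have lift: "\<exists>n. n div 2 = b \<and> (m,n) \<in> EB" if "(m div 2, b) \<in> EA" for m b
  proof (cases "even m \<longleftrightarrow> \<not> tw (m div 2) b")
    case True
    then show ?thesis using that by (intro exI[of _ "2*b"]) (simp add: EB_def)
  next
    case False
    then show ?thesis using that by (intro exI[of _ "2*b+1"]) (simp add: EB_def)
  qed
  have EBsym: "(n,m) \<in> EB" if "(m,n) \<in> EB" for m n
    using that symA twsym unfolding EB_def by auto
  have EBrefl: "(m,m) \<in> EB" if "m \<in> B" for m
    using that reflA twrefl unfolding EB_def B_def by auto
  have l00: "(2*a, 2*b) \<in> EB" "(2*a+1, 2*b+1) \<in> EB" if "(a,b) \<in> EA" "\<not> tw a b" for a b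
    using that unfolding EB_def by auto
  have l01: "(2*a, 2*b+1) \<in> EB" "(2*a+1, 2*b) \<in> EB" if "(a,b) \<in> EA" "tw a b" for a b
    using that unfolding EB_def by auto
  have finB: "finite B"
  proof (rule finite_subset[of B "{..< 2 * Max A + 2}"])
    show "B \<subseteq> {..< 2 * Max A + 2}"
    proof
      fix n assume "n \<in> B"
      then have "n div 2 \<le> Max A" using finA unfolding B_def by auto
      then show "n \<in> {..< 2 * Max A + 2}" by auto
    qed
  qed simp
  have graphB: "is_graph B EB"
    unfolding is_graph_def using EB_B EBrefl EBsym by auto
  have neB: "B \<noteq> {}"
  proof -
    obtain a where "a \<in> A" using neA by blast
    then have "2*a \<in> B" unfolding B_def by simp
    then show ?thesis by blast
  qed
  have cB: "gconnected EB B"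
    unfolding gconnected_def
  proof
    assume "\<exists>P0 Q0. P0 \<noteq> {} \<and> Q0 \<noteq> {} \<and> closedin (top_of_set B) P0 \<and>
      closedin (top_of_set B) Q0 \<and> P0 \<union> Q0 = B \<and> (\<forall>a\<in>P0. \<forall>b\<in>Q0. (a, b) \<notin> EB)"
    then obtain P0 Q0 where PQ: "P0 \<noteq> {}" "Q0 \<noteq> {}" "P0 \<union> Q0 = B"
      "\<forall>a\<in>P0. \<forall>b\<in>Q0. (a, b) \<notin> EB" by blast
    define pp where "pp m \<longleftrightarrow> m \<in> P0" for m
    have inv: "pp m = pp n" if e: "(m,n) \<in> EB" for m n
    proof -
      have "m \<in> P0 \<union> Q0" "n \<in> P0 \<union> Q0" using EB_B[OF e] PQ(3) by auto
      moreover have "(n,m) \<in> EB" using EBsym[OF e] .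
      ultimately show ?thesis using e PQ(4) unfolding pp_def by blast
    qed
    have Qc: "\<not> pp q" if "q \<in> Q0" for q
    proof -
      have "q \<in> B" using that PQ(3) by blast
      then have "(q,q) \<in> EB" by (rule EBrefl)
      then show ?thesis using that PQ(4) unfolding pp_def by blast
    qed
    have step: "(pp (2*a) = pp (2*b) \<and> pp (2*a+1) = pp (2*b+1) \<and> \<not> tw a b)
              \<or> (pp (2*a) = pp (2*b+1) \<and> pp (2*a+1) = pp (2*b) \<and> tw a b)"
      if "(a,b) \<in> EA" for a b
      using inv l00[OF that] l01[OF that] by blast
    define chi where "chi a \<longleftrightarrow> (pp (2*a) = pp (2*a+1))" for a
    have chic: "chi a = chi b" if "a \<in> A" "b \<in> A" for a b
    proof (rule const_conn[OF cA _ that])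
      fix x y assume "(x,y) \<in> EA"
      then show "chi x = chi y" using step[of x y] unfolding chi_def by blast
    qed
    have w1A: "w1 \<in> A" "w2 \<in> A" using w ST by blast+
    show False
    proof (cases "chi w1")
      case True
      then have chiA: "chi a" if "a \<in> A" for a using chic[OF that w1A(1)] by simp
      have psic: "pp (2*a) = pp (2*b)" if "a \<in> A" "b \<in> A" for a b
      proof (rule const_conn[OF cA _ that, where \<phi>="\<lambda>a. pp (2*a)"])
        fix x y assume xy: "x \<in> A" "y \<in> A" "(x,y) \<in> EA"
        show "pp (2*x) = pp (2*y)" using step[OF xy(3)] chiA[OF xy(2)] unfolding chi_def by blast
      qed
      have pB: "pp m = pp (2 * (m div 2))" if "m \<in> B" for m
      proof -
        have "m div 2 \<in> A" using that unfolding B_def by simp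
        then have c: "chi (m div 2)" by (rule chiA)
        show ?thesis
        proof (cases "even m")
          case True then show ?thesis by simp
        next
          case False
          then have "m = 2 * (m div 2) + 1" by presburger
          then show ?thesis using c unfolding chi_def by metis
        qed
      qed
      obtain p q where pq: "p \<in> P0" "q \<in> Q0" using PQ(1,2) by blast
      have pqB: "p \<in> B" "q \<in> B" using pq PQ(3) by blast+
      have "p div 2 \<in> A" "q div 2 \<in> A" using pqB unfolding B_def by simp_all
      then have "pp p = pp q" using pB[OF pqB(1)] pB[OF pqB(2)] psic by metis
      then show False using pq Qc unfolding pp_def by blast
    next
      case False
      then have chiA: "\<not> chi a" if "a \<in> A" for a using chic[OF that w1A(1)] by simp
      have phiS: "pp (2*w1) = pp (2*w2)"
      proof (rule const_conn[OF ST(3), where \<phi>="\<lambda>a. pp (2*a)"])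
        fix x y assume xy: "x \<in> S" "y \<in> S" "(x,y) \<in> EA"
        have "\<not> tw x y" using xy unfolding tw_def by blast
        then show "pp (2*x) = pp (2*y)" using step[OF xy(3)] by blast
      qed (use w in auto)
      have phiT: "(pp (2*w1) \<noteq> (w1 \<in> W)) = (pp (2*w2) \<noteq> (w2 \<in> W))"
      proof (rule const_conn[OF ST(4), where \<phi>="\<lambda>a. (pp (2*a) \<noteq> (a \<in> W))"])
        fix x y assume xy: "x \<in> T" "y \<in> T" "(x,y) \<in> EA"
        have yA: "y \<in> A" using xy ST by blast
        have cy: "pp (2*y+1) = (\<not> pp (2*y))" using chiA[OF yA] unfolding chi_def by blast
        show "(pp (2*x) \<noteq> (x \<in> W)) = (pp (2*y) \<noteq> (y \<in> W))"
        proof (cases "tw x y")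
          case True
          then have "(x \<in> W) \<noteq> (y \<in> W)" unfolding tw_def by blast
          moreover have "pp (2*x) = pp (2*y+1)" using step[OF xy(3)] True by blast
          ultimately show ?thesis using cy by blast
        next
          case False
          have "(x \<in> W) = (y \<in> W)"
          proof (cases "x \<in> S \<and> y \<in> S")
            case True then show ?thesis using cons[OF _ _ xy(3)] xy by blast
          next
            case False then show ?thesis using \<open>\<not> tw x y\<close> xy unfolding tw_def by blast
          qed
          moreover have "pp (2*x) = pp (2*y)" using step[OF xy(3)] False by blast
          ultimately show ?thesis by blast
        qed
      qed (use w in auto)
      show False using phiS phiT w by blast
    qed
  qed
  have confl: "confluent B EB A EA g"
    unfolding confluent_def epimorphism_def
  proof (intro conjI allI impI)
    show "continuous_on B g" by simp
    show "g ` B = A"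
    proof
      show "g ` B \<subseteq> A" unfolding g_def B_def by auto
      show "A \<subseteq> g ` B"
      proof
        fix a assume "a \<in> A"
        then have "2*a \<in> B" "g (2*a) = a" unfolding B_def g_def by simp_all
        then show "a \<in> g ` B" by (metis imageI)
      qed
    qed
    show "(\<lambda>(x, y). (g x, g y)) ` EB = EA"
    proof
      show "(\<lambda>(x, y). (g x, g y)) ` EB \<subseteq> EA" using EB_EA unfolding g_def by auto
      show "EA \<subseteq> (\<lambda>(x, y). (g x, g y)) ` EB"
      proof
        fix e assume "e \<in> EA"
        then obtain a b where e: "e = (a,b)" "(a,b) \<in> EA" by (cases e) auto
        then have "((2*a) div 2, b) \<in> EA" by simp
        then obtain n where n: "n div 2 = b" "(2*a, n) \<in> EB" using lift by blast
        then have "(\<lambda>(x, y). (g x, g y)) (2*a, n) = e" using e unfolding g_def by simp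
        then show "e \<in> (\<lambda>(x, y). (g x, g y)) ` EB" using n(2) by (metis imageI)
      qed
    qed
    fix Q' C assume Q': "Q' \<subseteq> A \<and> gconnected EA Q'" and C: "gcomponent EB (B \<inter> g -` Q') C"
    have CZ: "C \<subseteq> B \<inter> g -` Q'" and cC: "gconnected EB C"
      and maxC: "\<And>D. C \<subseteq> D \<Longrightarrow> D \<subseteq> B \<inter> g -` Q' \<Longrightarrow> gconnected EB D \<Longrightarrow> D = C"
      using C unfolding gcomponent_def by blast+
    show "g ` C = Q'"
    proof (cases "C = {}")
      case True
      have "Q' = {}"
      proof (rule ccontr)
        assume "Q' \<noteq> {}"
        then obtain a where a: "a \<in> Q'" by blast
        then have z: "2*a \<in> B \<inter> g -` Q'" using Q' unfolding B_def g_def by auto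
        have "gconnected EB {2*a}" using z EBrefl by (intro single_conn) blast
        then have "{2*a} = C" using maxC[of "{2*a}"] z True by blast
        then show False using True by blast
      qed
      then show ?thesis using True by simp
    next
      case False
      show ?thesis
      proof (rule ccontr)
        assume ne: "g ` C \<noteq> Q'"
        have sub: "g ` C \<subseteq> Q'" using CZ by blast
        have 1: "g ` C \<noteq> {}" using False by blast
        have 2: "Q' - g ` C \<noteq> {}" using ne sub by blast
        have 3: "closedin (top_of_set Q') (g ` C)" "closedin (top_of_set Q') (Q' - g ` C)"
          using sub by (auto intro!: nat_closedin)
        have 4: "g ` C \<union> (Q' - g ` C) = Q'" using sub by blast
        have "\<not> (\<forall>a\<in>g ` C. \<forall>b\<in>Q' - g ` C. (a, b) \<notin> EA)"
          using gconnectedD[OF _ 1 2 3 4] Q' by blast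
        then obtain c b where cb: "c \<in> C" "b \<in> Q'" "b \<notin> g ` C" "(g c, b) \<in> EA" by blast
        then have "(c div 2, b) \<in> EA" unfolding g_def by simp
        then obtain n where n: "n div 2 = b" "(c, n) \<in> EB" using lift by blast
        have nZ: "n \<in> B \<inter> g -` Q'" using EB_B[OF n(2)] n(1) cb(2) unfolding g_def by simp
        have "gconnected EB (insert n C)"
          by (rule insert_conn[OF cC cb(1) n(2) EBsym[OF n(2)]])
        then have "insert n C = C" using maxC[of "insert n C"] nZ CZ by blast
        then have "n \<in> C" by blast
        then have "b \<in> g ` C" using n(1) unfolding g_def by blast
        then show False using cb(3) by blast
      qed
    qed
  qed
  have propS: "\<forall>m n. (m,n) \<in> EB \<longrightarrow> g m \<in> S \<longrightarrow> g n \<in> S \<longrightarrow> even m = even n"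
    unfolding EB_def g_def tw_def by auto
  have propT: "\<forall>m n. (m,n) \<in> EB \<longrightarrow> g m \<in> T \<longrightarrow> g n \<in> T \<longrightarrow>
           (even m \<noteq> (g m \<in> W)) = (even n \<noteq> (g n \<in> W))"
  proof (intro allI impI)
    fix m n assume e: "(m,n) \<in> EB" and t: "g m \<in> T" "g n \<in> T"
    have ea: "(g m, g n) \<in> EA" using EB_EA[OF e] unfolding g_def .
    show "(even m \<noteq> (g m \<in> W)) = (even n \<noteq> (g n \<in> W))"
    proof (cases "g m \<in> S \<and> g n \<in> S")
      case True
      then have "(g m \<in> W) = (g n \<in> W)" using cons[OF _ _ ea] t by blast
      moreover have "even m = even n" using True propS e by blast
      ultimately show ?thesis by simp
    next
      case False
      then have "(even m = even n) \<longleftrightarrow> \<not> ((g m \<in> W) \<noteq> (g n \<in> W))"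
        using e t unfolding EB_def tw_def g_def by auto
      then show ?thesis by blast
    qed
  qed
  show ?thesis
    by (intro exI[of _ B] exI[of _ EB] exI[of _ g] conjI propS propT confl)
       (use finB graphB neB cB in \<open>simp add: fin_conn_graph_def finite_graph_def\<close>)
qed

theorem mainTheorem14:
  fixes V :: "'a::metric_space set" and E :: "('a \<times> 'a) set"
  assumes "is_proj_fraisse_limit V E"
  shows "\<forall>P Q. P \<subseteq> V \<and> Q \<subseteq> V \<and> closed P \<and> closed Q
           \<and> gconnected E P \<and> gconnected E Q \<longrightarrow> gconnected E (P \<inter> Q)"
proof (intro allI impI)
  fix P Q assume PQ: "P \<subseteq> V \<and> Q \<subseteq> V \<and> closed P \<and> closed Q \<and> gconnected E P \<and> gconnected E Q"
  then have PV: "P \<subseteq> V" and QV: "Q \<subseteq> V" and clP: "closed P" and clQ: "closed Q"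
    and cP: "gconnected E P" and cQ: "gconnected E Q" by blast+
  note D = assms[unfolded is_proj_fraisse_limit_def]
  have TG: "topological_graph V E" using D by (rule conjunct1)
  note amal0 = conjunct1[OF conjunct2[OF conjunct2[OF D]]]
  note small0 = conjunct2[OF conjunct2[OF conjunct2[OF D]]]
  have TG': "is_graph V E" "compact V" "closed E"
    using TG unfolding topological_graph_def by (simp_all)
  have cV: "compact V" and clE: "closed E" and EV: "E \<subseteq> V \<times> V"
    and reflE: "\<And>x. x \<in> V \<Longrightarrow> (x,x) \<in> E" and symE: "\<And>x y. (x,y) \<in> E \<Longrightarrow> (y,x) \<in> E"
    using TG' unfolding is_graph_def by auto
  show "gconnected E (P \<inter> Q)"
    unfolding gconnected_def
  proof
    assume "\<exists>X Y. X \<noteq> {} \<and> Y \<noteq> {} \<and> closedin (top_of_set (P \<inter> Q)) X \<and>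
      closedin (top_of_set (P \<inter> Q)) Y \<and> X \<union> Y = P \<inter> Q \<and> (\<forall>a\<in>X. \<forall>b\<in>Y. (a, b) \<notin> E)"
    then obtain X Y where XY: "X \<noteq> {}" "Y \<noteq> {}" "closedin (top_of_set (P \<inter> Q)) X"
      "closedin (top_of_set (P \<inter> Q)) Y" "X \<union> Y = P \<inter> Q" "\<forall>a\<in>X. \<forall>b\<in>Y. (a, b) \<notin> E"
      by blast
    have clPQ: "closed (P \<inter> Q)" using clP clQ by blast
    have clX: "closed X" using closedin_closed_trans[OF XY(3) clPQ] .
    have clY: "closed Y" using closedin_closed_trans[OF XY(4) clPQ] .
    have cmp: "compact Z" if "Z \<subseteq> V" "closed Z" for Z
      using compact_Int_closed[OF cV that(2)] that(1) by (simp add: Int_absorb1)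
    have cX: "compact X" using cmp clX XY(5) PV by blast
    have cY: "compact Y" using cmp clY XY(5) PV by blast
    have cPc: "compact P" using cmp PV clP by blast
    obtain \<eta> where \<eta>: "\<eta> > 0" "\<And>u u'. infdist u X < \<eta> \<Longrightarrow> infdist u' Y < \<eta> \<Longrightarrow> (u, u') \<notin> E"
      using lemB[OF cX cY clE XY(1,2,6)] by blast
    obtain \<epsilon>1 where \<epsilon>1: "\<epsilon>1 > 0" "\<And>p q. p \<in> P \<Longrightarrow> q \<in> Q \<Longrightarrow> dist p q < \<epsilon>1 \<Longrightarrow>
        infdist p X < \<eta>/4 \<or> infdist p Y < \<eta>/4"
      using lemA[OF cPc clQ XY(5), of "\<eta>/4"] \<eta>(1) by auto
    define \<epsilon> where "\<epsilon> = min \<epsilon>1 (\<eta>/4)"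
    have \<epsilon>pos: "\<epsilon> > 0" using \<epsilon>1(1) \<eta>(1) unfolding \<epsilon>_def by simp
    obtain A EA f where A: "fin_conn_graph A EA" "confluent V E A EA f"
      "\<forall>a\<in>A. diameter (V \<inter> f -` {a}) < \<epsilon>"
      using small0[rule_format, OF \<epsilon>pos] by blast
    have contf: "continuous_on V f" and fV: "f ` V = A" and fE: "(\<lambda>(x, y). (f x, f y)) ` E = EA"
      using A(2) unfolding confluent_def epimorphism_def by blast+
    have fE1: "(f u, f v) \<in> EA" if "(u,v) \<in> E" for u v using fE that by force
    have fE2: "\<exists>u v. (u,v) \<in> E \<and> f u = a \<and> f v = b" if "(a,b) \<in> EA" for a b
      using fE that by force
    have fib: "dist u v < \<epsilon>" if "u \<in> V" "v \<in> V" "f u = f v" for u v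
    proof -
      have "f u \<in> A" using fV that by blast
      then have d: "diameter (V \<inter> f -` {f u}) < \<epsilon>" using A(3) by blast
      have "bounded (V \<inter> f -` {f u})" using compact_imp_bounded[OF cV] bounded_subset by blast
      then have "dist u v \<le> diameter (V \<inter> f -` {f u})"
        using that by (intro diameter_bounded_bound) auto
      then show ?thesis using d by linarith
    qed
    define S where "S = f ` P"
    define T where "T = f ` Q"
    define W where "W = {a \<in> A. \<exists>v\<in>V. f v = a \<and> infdist v Y < \<eta>/2}"
    have SA: "S \<subseteq> A" "T \<subseteq> A" using PV QV fV unfolding S_def T_def by blast+
    have cS: "gconnected EA S" unfolding S_def by (rule img_conn[OF cP PV contf fE1])
    have cT: "gconnected EA T" unfolding T_def by (rule img_conn[OF cQ QV contf fE1])
    obtain x y where xy: "x \<in> X" "y \<in> Y" using XY(1,2) by blast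
    have xyV: "x \<in> P" "x \<in> Q" "y \<in> P" "y \<in> Q" using xy XY(5) by blast+
    have w1: "f x \<in> S \<inter> T" and w2: "f y \<in> S \<inter> T" using xyV unfolding S_def T_def by blast+
    have w2W: "f y \<in> W" unfolding W_def using xy(2) xyV PV fV \<eta>(1) by auto
    have w1W: "f x \<notin> W"
    proof
      assume "f x \<in> W"
      then obtain v where v: "v \<in> V" "f v = f x" "infdist v Y < \<eta>/2" unfolding W_def by blast
      have "dist v x < \<epsilon>" using fib[of v x] v xyV PV by blast
      then have "dist v x < \<eta>/4" unfolding \<epsilon>_def by simp
      moreover have "infdist v X \<le> dist v x"
        using infdist_triangle[of v X x] xy(1) by simp
      ultimately have "infdist v X < \<eta>" using \<eta>(1) by linarith
      moreover have "infdist v Y < \<eta>" using v(3) \<eta>(1) by simp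
      ultimately show False using \<eta>(2) reflE[OF v(1)] by blast
    qed
    have key: "b \<in> W" if ab: "a \<in> A" "b \<in> S \<inter> T" "(a,b) \<in> EA" "a \<in> W" for a b
    proof -
      obtain u u' where uu: "(u,u') \<in> E" "f u = a" "f u' = b" using fE2[OF ab(3)] by blast
      have uV: "u \<in> V" "u' \<in> V" using uu(1) EV by blast+
      obtain p' q' where pq: "p' \<in> P" "q' \<in> Q" "f p' = b" "f q' = b"
        using ab(2) unfolding S_def T_def by (metis IntE imageE)
      have "dist p' q' < \<epsilon>" using fib[of p' q'] pq PV QV by auto
      then have "dist p' q' < \<epsilon>1" unfolding \<epsilon>_def by simp
      then have alt: "infdist p' X < \<eta>/4 \<or> infdist p' Y < \<eta>/4" using \<epsilon>1(2) pq by blast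
      have du': "dist u' p' < \<epsilon>" using fib[of u' p'] uV pq PV uu by auto
      then have du4: "dist u' p' < \<eta>/4" unfolding \<epsilon>_def by simp
      show ?thesis
      proof (cases "infdist p' Y < \<eta>/4")
        case True
        have "infdist u' Y < \<eta>/2"
          using infdist_triangle[of u' Y p'] du4 True by linarith
        then show ?thesis unfolding W_def using uV uu SA ab(2) by auto
      next
        case False
        then have px: "infdist p' X < \<eta>/4" using alt by blast
        have iX: "infdist u' X < \<eta>"
          using infdist_triangle[of u' X p'] du4 px \<eta>(1) by linarith
        obtain v where v: "v \<in> V" "f v = a" "infdist v Y < \<eta>/2" using ab(4) unfolding W_def by blast
        have "dist u v < \<epsilon>" using fib[of u v] uV v uu by auto
        then have "dist u v < \<eta>/4" unfolding \<epsilon>_def by simp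
        then have iY: "infdist u Y < \<eta>"
          using infdist_triangle[of u Y v] v(3) \<eta>(1) by linarith
        show ?thesis using \<eta>(2)[OF iX iY] symE[OF uu(1)] by blast
      qed
    qed
    have EAsym: "(b,a) \<in> EA" if "(a,b) \<in> EA" for a b
      using A(1) that unfolding fin_conn_graph_def finite_graph_def is_graph_def by auto
    have cons: "(a\<in>W \<longleftrightarrow> b\<in>W)" if "a \<in> S \<inter> T" "b \<in> S \<inter> T" "(a,b) \<in> EA" for a b
      using key[of a b] key[of b a] that EAsym[of a b] SA by blast
    obtain B EB g where BG: "fin_conn_graph B EB" "confluent B EB A EA g"
      "\<forall>m n. (m,n) \<in> EB \<longrightarrow> g m \<in> S \<longrightarrow> g n \<in> S \<longrightarrow> even m = even n"
      "\<forall>m n. (m,n) \<in> EB \<longrightarrow> g m \<in> T \<longrightarrow> g n \<in> T \<longrightarrow>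
           (even m \<noteq> (g m \<in> W)) = (even n \<noteq> (g n \<in> W))"
      using double_cover[OF A(1) SA cS cT cons w1 w1W w2 w2W] by blast
    obtain h where h: "confluent V E B EB h" "\<forall>x\<in>V. f x = g (h x)"
      using amal0[rule_format, OF conjI[OF A(1) conjI[OF BG(1) conjI[OF A(2) BG(2)]]]] by blast
    have conth: "continuous_on V h" and hE: "(\<lambda>(x, y). (h x, h y)) ` E = EB"
      using h(1) unfolding confluent_def epimorphism_def by blast+
    have hE1: "(h u, h v) \<in> EB" if "(u,v) \<in> E" for u v using hE that by force
    have chP: "gconnected EB (h ` P)" by (rule img_conn[OF cP PV conth hE1])
    have chQ: "gconnected EB (h ` Q)" by (rule img_conn[OF cQ QV conth hE1])
    have gS: "g m \<in> S" if "m \<in> h ` P" for m using that h(2) PV unfolding S_def by force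
    have gT: "g m \<in> T" if "m \<in> h ` Q" for m using that h(2) QV unfolding T_def by force
    have e1: "even (h x) = even (h y)"
    proof (rule const_conn[OF chP, where \<phi>=even])
      fix m n assume "m \<in> h ` P" "n \<in> h ` P" "(m,n) \<in> EB"
      then show "even m = even n" using BG(3) gS[of m] gS[of n] by blast
    qed (use xyV in auto)
    have e2: "(even (h x) \<noteq> (g (h x) \<in> W)) = (even (h y) \<noteq> (g (h y) \<in> W))"
    proof (rule const_conn[OF chQ, where \<phi>="\<lambda>m. (even m \<noteq> (g m \<in> W))"])
      fix m n assume "m \<in> h ` Q" "n \<in> h ` Q" "(m,n) \<in> EB"
      then show "(even m \<noteq> (g m \<in> W)) = (even n \<noteq> (g n \<in> W))" using BG(4) gT[of m] gT[of n] by blast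
    qed (use xyV in auto)
    have "g (h x) = f x" "g (h y) = f y" using h(2) xyV PV by auto
    then show False using e1 e2 w1W w2W by simp
  qed
qed

end
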